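(* Let $A\in\mathbb{R}^{D\times D}$ be real symmetric, $\hat A_1,\hat A_2,\dots$ mutually independent random $D\times D$ matrices with $\mathbb{E}[\hat A_j]=A$, and $\hat T_0=I$, $\hat T_1=\hat A_1$, $\hat T_k=2\hat A_k\hat T_{k-1}-\hat T_{k-2}$ ($k\ge2$). Suppose $4\,\mathbb{E}[\|\hat A_k\|^2]+2\,\mathbb{E}[\|\hat A_k\|]+1\le\alpha$ for all $k\ge1$. Fix $\lambda'\in(-1,1)$ and $\kappa>0$, and draw $k\sim q(\lambda',\kappa)$ independently of $(\hat A_j)_j$. Then $$\mathbb{E}\left[\left\|\frac{\gamma_k(\lambda',\kappa)}{q_k(\lambda',\kappa)}\hat T_k\right\|_F^2\right]\le\frac{D\,e^{\kappa}}{\pi^2I_0(\kappa)}\left(1+\frac{2e^{\kappa}}{I_0(\kappa)}\Big(e^{\alpha\kappa/2}-1\Big)\right).$$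
   Context: $I_\eta(\kappa)$ is the modified Bessel function of the first kind; $\|\cdot\|$ is the spectral norm and $\|\cdot\|_F$ the Frobenius norm. The von Mises kernel Chebyshev coefficients are $\gamma_0(\lambda',\kappa)=1/\pi$ and $\gamma_k(\lambda',\kappa)=\frac{2}{\pi}\frac{I_k(\kappa)}{I_0(\kappa)}\cos(k\arccos\lambda')$ for $k\ge1$. The proposal distribution $q(\lambda',\kappa)$ on $\mathbb{N}_0$ is $q_0(\lambda',\kappa)=1/\mathcal{Z}(\lambda',\kappa)$ and $q_k(\lambda',\kappa)=\frac{2}{\mathcal{Z}(\lambda',\kappa)}\frac{I_k(\kappa)}{I_0(\kappa)}|\cos(k\arccos\lambda')|$ for $k\ge1$, where $\mathcal{Z}(\lambda',\kappa)=1+\frac{2}{I_0(\kappa)}\sum_{k\ge1}I_k(\kappa)|\cos(k\arccos\lambda')|$. Indices $k$ with $q_k=0$ (equivalently $\gamma_k=0$) are never drawn. *)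

theory Defs
  imports "HOL-Probability.Probability"
begin

definition besselI :: "nat \<Rightarrow> real \<Rightarrow> real" where
  "besselI k x = (\<Sum>m. (x / 2) ^ (2 * m + k) / (fact m * fact (m + k)))"

definition vm_gamma :: "real \<Rightarrow> real \<Rightarrow> nat \<Rightarrow> real" where
  "vm_gamma l \<kappa> k = (if k = 0 then 1 / pi
     else 2 / pi * (besselI k \<kappa> / besselI 0 \<kappa>) * cos (real k * arccos l))"

definition vm_Z :: "real \<Rightarrow> real \<Rightarrow> real" where
  "vm_Z l \<kappa> = 1 + 2 / besselI 0 \<kappa> *
     (\<Sum>k. besselI (Suc k) \<kappa> * \<bar>cos (real (Suc k) * arccos l)\<bar>)"

definition vm_q :: "real \<Rightarrow> real \<Rightarrow> nat \<Rightarrow> real" where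
  "vm_q l \<kappa> k = (if k = 0 then 1 / vm_Z l \<kappa>
     else 2 / vm_Z l \<kappa> * (besselI k \<kappa> / besselI 0 \<kappa>) * \<bar>cos (real k * arccos l)\<bar>)"

fun chebT :: "(nat \<Rightarrow> real^'n^'n) \<Rightarrow> nat \<Rightarrow> real^'n^'n" where
  "chebT B 0 = mat 1"
| "chebT B (Suc 0) = B 1"
| "chebT B (Suc (Suc k)) = 2 *\<^sub>R (B (k + 2) ** chebT B (Suc k)) - chebT B k"

definition spec_norm :: "real^'n^'n \<Rightarrow> real" where
  "spec_norm B = onorm (\<lambda>x. B *v x)"

definition frob_norm :: "real^'n^'n \<Rightarrow> real" where
  "frob_norm B = sqrt (\<Sum>i\<in>UNIV. \<Sum>j\<in>UNIV. (B $ i $ j)^2)"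

end

theory Submission
  imports Defs
begin


lemma normsq_vec: "(norm (v::real^'n))^2 = (\<Sum>i\<in>UNIV. (v$i)^2)"
  by (simp add: norm_vec_def L2_set_def sum_nonneg)

lemma normsq_mat: "(norm (X::real^'n^'n))^2 = (\<Sum>i\<in>UNIV. \<Sum>j\<in>UNIV. (X$i$j)^2)"
  by (simp add: norm_vec_def L2_set_def sum_nonneg)

lemma frob_eq_norm: "frob_norm B = norm B"
proof -
  have "norm B = sqrt ((norm B)^2)" by simp
  also have "\<dots> = frob_norm B" unfolding normsq_mat frob_norm_def ..
  finally show ?thesis by simp
qed

lemma spec_nonneg: "0 \<le> spec_norm B"
  unfolding spec_norm_def by (rule onorm_pos_le) simp

lemma spec_mv: "norm (B *v v) \<le> spec_norm B * norm v"
  unfolding spec_norm_def by (rule onorm) simp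

lemma normsq_mat_col: "(norm (X::real^'n^'n))^2 = (\<Sum>j\<in>UNIV. (norm (\<chi> i. X$i$j))^2)"
  unfolding normsq_mat normsq_vec by (simp only: vec_lambda_beta) (rule sum.swap)

lemma spec_mm: "norm (B ** C) \<le> spec_norm B * norm (C::real^'n^'n)"
proof -
  have col: "(\<chi> i. (B ** C)$i$j) = B *v (\<chi> i. C$i$j)" for j
    by (simp add: matrix_matrix_mult_def matrix_vector_mult_def vec_eq_iff)
  have "(norm (B ** C))^2 = (\<Sum>j\<in>UNIV. (norm (B *v (\<chi> i. C$i$j)))^2)"
    unfolding normsq_mat_col col ..
  also have "\<dots> \<le> (\<Sum>j\<in>UNIV. (spec_norm B * norm (\<chi> i. C$i$j))^2)"
    by (intro sum_mono power_mono spec_mv) simp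
  also have "\<dots> = (spec_norm B * norm C)^2"
    by (simp add: power_mult_distrib normsq_mat_col[of C] sum_distrib_left)
  finally show ?thesis
    by (rule power2_le_imp_le) (simp add: spec_nonneg)
qed

lemma normsq_mat1: "(norm (mat 1 :: real^'n^'n))^2 = real CARD('n)"
proof -
  have "(\<Sum>j\<in>UNIV. ((mat 1::real^'n^'n)$i$j)^2) = 1" for i
    by (subst sum.cong[OF refl, of _ _ "\<lambda>j. if i = j then 1 else 0"]) (auto simp: mat_def)
  thus ?thesis unfolding normsq_mat by simp
qed

lemma norm_le_spec: "(norm (B::real^'n^'n))^2 \<le> real CARD('n) * (spec_norm B)^2"
proof -
  have "norm B = norm (B ** mat 1)" by simp
  also have "\<dots> \<le> spec_norm B * norm (mat 1 :: real^'n^'n)" by (rule spec_mm)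
  finally have "(norm B)^2 \<le> (spec_norm B * norm (mat 1 :: real^'n^'n))^2"
    by (intro power_mono) auto
  thus ?thesis by (simp add: power_mult_distrib normsq_mat1 mult.commute)
qed

lemma spec_le_norm: "spec_norm B \<le> real CARD('n) * real CARD('n) * norm (B::real^'n^'n)"
proof -
  have "spec_norm B \<le> (\<Sum>i\<in>UNIV. \<Sum>j\<in>UNIV. \<bar>B $ i $ j\<bar>)"
    unfolding spec_norm_def by (rule onorm_le_matrix_component_sum)
  also have "\<dots> \<le> (\<Sum>i\<in>(UNIV::'n set). \<Sum>j\<in>(UNIV::'n set). norm B)"
  proof (intro sum_mono)
    fix i j
    show "\<bar>B $ i $ j\<bar> \<le> norm B"
      using component_le_norm_cart[of "B$i" j] Finite_Cartesian_Product.norm_nth_le[of B i] by linarith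
  qed
  finally show ?thesis by simp
qed



lemma cont_mm: "continuous_on UNIV (\<lambda>x::(real^'n^'n)\<times>(real^'n^'n). fst x ** snd x)"
  unfolding matrix_matrix_mult_def
  by (intro continuous_intros continuous_on_vec_lambda)

lemma mm_meas[measurable]:
  fixes f g :: "'a \<Rightarrow> real^'n^'n"
  assumes "f \<in> borel_measurable N" "g \<in> borel_measurable N"
  shows "(\<lambda>x. f x ** g x) \<in> borel_measurable N"
  by (rule borel_measurable_continuous_Pair[OF assms]) (rule cont_mm)

lemma spec_tri: "spec_norm B \<le> spec_norm (B - C) + spec_norm (C::real^'n^'n)"
proof -
  have "onorm (\<lambda>x. (B - C) *v x + C *v x) \<le> onorm (\<lambda>x. (B - C) *v x) + onorm (\<lambda>x. C *v x)"
    by (rule onorm_triangle) simp_all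
  moreover have "(\<lambda>x. (B - C) *v x + C *v x) = (\<lambda>x. B *v x)"
    by (simp add: matrix_vector_mult_diff_rdistrib)
  ultimately show ?thesis unfolding spec_norm_def by simp
qed

lemma spec_lip: "dist (spec_norm B) (spec_norm C) \<le> (real CARD('n) * real CARD('n)) * dist B (C::real^'n^'n)"
proof -
  have 1: "spec_norm B - spec_norm C \<le> real CARD('n) * real CARD('n) * norm (B - C)"
    using spec_tri[of B C] spec_le_norm[of "B - C"] by linarith
  have 2: "spec_norm C - spec_norm B \<le> real CARD('n) * real CARD('n) * norm (B - C)"
    using spec_tri[of C B] spec_le_norm[of "C - B", unfolded norm_minus_commute[of C B]] by linarith
  show ?thesis using 1 2 by (simp add: dist_real_def dist_norm abs_le_iff)
qed

lemma spec_meas_borel: "spec_norm \<in> borel_measurable (borel :: (real^'n^'n) measure)"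
proof (rule borel_measurable_continuous_onI)
  have "(real CARD('n) * real CARD('n))-lipschitz_on UNIV (spec_norm :: real^'n^'n \<Rightarrow> real)"
    by (rule lipschitz_onI) (auto intro: spec_lip)
  thus "continuous_on UNIV (spec_norm :: real^'n^'n \<Rightarrow> real)"
    by (rule lipschitz_on_continuous_on)
qed

lemma spec_meas[measurable]:
  "f \<in> borel_measurable N \<Longrightarrow> (\<lambda>x. spec_norm (f x :: real^'n^'n)) \<in> borel_measurable N"
  using measurable_compose[OF _ spec_meas_borel] by blast

lemma chebT_cong:
  "(\<And>j. 1 \<le> j \<Longrightarrow> j \<le> k \<Longrightarrow> B j = B' j) \<Longrightarrow> chebT B k = chebT B' k"
proof (induction k rule: less_induct)
  case (less k)
  show ?case
  proof (cases k)
    case 0 then show ?thesis by simp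
  next
    case (Suc k1)
    show ?thesis
    proof (cases k1)
      case 0 then show ?thesis using less.prems Suc by simp
    next
      case (Suc k2)
      have "chebT B k2 = chebT B' k2" "chebT B (Suc k2) = chebT B' (Suc k2)"
        using less \<open>k = Suc k1\<close> Suc by auto
      moreover have "B (k2+2) = B' (k2+2)" using less.prems \<open>k = Suc k1\<close> Suc by auto
      ultimately show ?thesis using \<open>k = Suc k1\<close> Suc by simp
    qed
  qed
qed

lemma chebT_meas:
  fixes B :: "'a \<Rightarrow> nat \<Rightarrow> real^'n^'n"
  assumes "\<And>j. 1 \<le> j \<Longrightarrow> j \<le> k \<Longrightarrow> (\<lambda>\<omega>. B \<omega> j) \<in> borel_measurable N"
  shows "(\<lambda>\<omega>. chebT (B \<omega>) k) \<in> borel_measurable N"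
  using assms
proof (induction k rule: less_induct)
  case (less k)
  show ?case
  proof (cases k)
    case 0 then show ?thesis by simp
  next
    case (Suc k1)
    show ?thesis
    proof (cases k1)
      case 0 then show ?thesis using less.prems Suc by simp
    next
      case (Suc k2)
      have m1: "(\<lambda>\<omega>. chebT (B \<omega>) k2) \<in> borel_measurable N" 
        using less \<open>k = Suc k1\<close> Suc by auto
      have m2: "(\<lambda>\<omega>. chebT (B \<omega>) (Suc k2)) \<in> borel_measurable N"
        using less \<open>k = Suc k1\<close> Suc by auto
      have m3: "(\<lambda>\<omega>. B \<omega> (k2+2)) \<in> borel_measurable N" using less.prems \<open>k = Suc k1\<close> Suc by auto
      have "(\<lambda>\<omega>. 2 *\<^sub>R (B \<omega> (k2 + 2) ** chebT (B \<omega>) (Suc k2)) - chebT (B \<omega>) k2) \<in> borel_measurable N"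
        using m1 m2 m3 by measurable
      then show ?thesis using \<open>k = Suc k1\<close> Suc by simp
    qed
  qed
qed

lemma chebT_rec_norm:
  "norm (chebT B (Suc (Suc k))) \<le> 2 * spec_norm (B (k+2)) * norm (chebT B (Suc k)) + norm (chebT B k)"
proof -
  have "norm (chebT B (Suc (Suc k))) \<le> norm (2 *\<^sub>R (B (k + 2) ** chebT B (Suc k))) + norm (chebT B k)"
    by (simp only: chebT.simps) (rule norm_triangle_ineq4)
  also have "norm (2 *\<^sub>R (B (k + 2) ** chebT B (Suc k))) \<le> 2 * (spec_norm (B (k+2)) * norm (chebT B (Suc k)))"
    using spec_mm[of "B (k+2)" "chebT B (Suc k)"] by simp
  finally show ?thesis by simp
qed



lemma fact_mult_le: "fact m * fact k \<le> (fact (m+k) :: real)"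
proof -
  have "fact k * fact m * ((m+k) choose k) = (fact (m+k) :: nat)"
    using binomial_fact_lemma[of k "m+k"] by simp
  moreover have "((m+k) choose k) > 0" by simp
  ultimately have "fact m * fact k \<le> (fact (m+k) :: nat)"
  proof -
    assume eq: "fact k * fact m * ((m+k) choose k) = (fact (m+k) :: nat)" and p: "((m+k) choose k) > 0"
    have "fact m * fact k \<le> fact m * fact k * ((m+k) choose k)" using p by (simp add: Suc_le_eq)
    also have "\<dots> = fact (m+k)" using eq by (simp add: ac_simps)
    finally show ?thesis .
  qed
  then have "real (fact m * fact k) \<le> real (fact (m+k))" by linarith
  thus ?thesis by (simp only: of_nat_mult of_nat_fact)
qed

lemma summable_sqexp: "summable (\<lambda>m. (y::real)^m / fact m)"
  using summable_exp[of y] by (simp add: divide_inverse mult.commute)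

lemma bt_le2:
  fixes x :: real assumes "0 \<le> x"
  shows "x^(2*m+k) / (fact m * fact (m+k)) \<le> x^k / fact k * (x^(2*m+0) / (fact m * fact (m+0)))"
proof -
  have p: "0 < fact m * (fact m * (fact k::real))" by (intro mult_pos_pos) auto
  have "x^(2*m+k) / (fact m * fact (m+k)) \<le> x^(2*m+k) / (fact m * (fact m * fact k))"
    using fact_mult_le[of m k] assms p
    by (intro divide_left_mono mult_left_mono) auto
  also have "x^(2*m+k) / (fact m * (fact m * fact k)) = x^k / fact k * (x^(2*m+0) / (fact m * fact (m+0)))"
    by (simp add: power_add ac_simps)
  finally show ?thesis .
qed

lemma b0_le:
  fixes x :: real assumes "0 \<le> x"
  shows "x^(2*m+0) / (fact m * fact (m+0)) \<le> (x^2)^m / fact m"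
proof -
  have "x^(2*m+0) / (fact m * fact (m+0)) = (x^2)^m / fact m / fact m"
    by (simp add: power_mult)
  also have "\<dots> \<le> (x^2)^m / fact m / 1"
    by (intro divide_left_mono) auto
  finally show ?thesis by simp
qed

lemma bt_summable:
  fixes x :: real assumes x: "0 \<le> x"
  shows "summable (\<lambda>m. x^(2*m+k) / (fact m * fact (m+k)))"
proof (rule summable_comparison_test')
  show "summable (\<lambda>m. x^k / fact k * ((x^2)^m / fact m))"
    by (intro summable_mult summable_sqexp)
  show "norm (x^(2*m+k) / (fact m * fact (m+k))) \<le> x^k / fact k * ((x^2)^m / fact m)" for m
  proof -
    have "norm (x^(2*m+k) / (fact m * fact (m+k))) = x^(2*m+k) / (fact m * fact (m+k))"
      using x by simp
    also have "\<dots> \<le> x^k / fact k * (x^(2*m+0) / (fact m * fact (m+0)))" by (rule bt_le2[OF x])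
    also have "\<dots> \<le> x^k / fact k * ((x^2)^m / fact m)"
      using x by (intro mult_left_mono b0_le) auto
    finally show ?thesis .
  qed
qed

lemma besselI_nonneg: "0 \<le> \<kappa> \<Longrightarrow> 0 \<le> besselI k \<kappa>"
  unfolding besselI_def by (intro suminf_nonneg bt_summable) auto

lemma besselI0_ge1: "0 \<le> \<kappa> \<Longrightarrow> 1 \<le> besselI 0 \<kappa>"
proof -
  assume k: "0 \<le> \<kappa>"
  have "(\<Sum>m\<in>{0}. (\<kappa>/2)^(2*m+0) / (fact m * fact (m+0))) \<le> (\<Sum>m. (\<kappa>/2)^(2*m+0) / (fact m * fact (m+0)))"
    using k by (intro sum_le_suminf bt_summable) auto
  thus ?thesis unfolding besselI_def by simp
qed

lemma besselI_le:
  assumes "0 \<le> \<kappa>"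
  shows "besselI k \<kappa> \<le> (\<kappa>/2)^k / fact k * besselI 0 \<kappa>"
proof -
  let ?x = "\<kappa>/2"
  have x: "0 \<le> ?x" using assms by simp
  have "besselI k \<kappa> \<le> (\<Sum>m. ?x^k / fact k * (?x^(2*m+0) / (fact m * fact (m+0))))"
    unfolding besselI_def
    by (intro suminf_le bt_le2 x bt_summable summable_mult)
  also have "\<dots> = ?x^k / fact k * besselI 0 \<kappa>"
    unfolding besselI_def by (rule suminf_mult) (rule bt_summable[OF x])
  finally show ?thesis .
qed

lemma exp_partial_le: "0 \<le> (x::real) \<Longrightarrow> (\<Sum>a<L. x^a / fact a) \<le> exp x"
proof -
  assume x: "0 \<le> x"
  have s: "(\<lambda>n. x^n / fact n) sums exp x" using exp_converges[of x] by (simp add: divide_inverse mult.commute)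
  have "(\<Sum>a<L. x^a / fact a) \<le> (\<Sum>a. x^a / fact a)"
    using x by (intro sum_le_suminf sums_summable[OF s]) auto
  thus ?thesis using sums_unique[OF s] by simp
qed



lemma box:
  fixes x :: real assumes x: "0 \<le> x"
  shows "(\<Sum>m<M. x^(m+m)/(fact m * fact m)) + (\<Sum>k<N. \<Sum>m<M. x^(m+(m+Suc k))/(fact m * fact (m+Suc k)))
       + (\<Sum>k<N. \<Sum>m<M. x^((m+Suc k)+m)/(fact (m+Suc k) * fact m)) \<le> exp x * exp x"
proof -
  define f where "f = (\<lambda>(a::nat,b::nat). x^(a+b)/(fact a * fact b))"
  let ?L = "M+N"
  define D0 where "D0 = (\<lambda>m. (m,m)) ` {..<M}"
  define U where "U = (\<lambda>(k,m). (m, m+Suc k)) ` ({..<N}\<times>{..<M})"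
  define W where "W = (\<lambda>(k,m). (m+Suc k, m)) ` ({..<N}\<times>{..<M})"
  have d0: "(\<Sum>m<M. x^(m+m)/(fact m * fact m)) = sum f D0"
    unfolding D0_def f_def by (subst sum.reindex) (auto simp: inj_on_def)
  have u: "(\<Sum>k<N. \<Sum>m<M. x^(m+(m+Suc k))/(fact m * fact (m+Suc k))) = sum f U"
    unfolding U_def f_def by (subst sum.reindex) (auto simp: inj_on_def sum.cartesian_product intro!: sum.cong)
  have w: "(\<Sum>k<N. \<Sum>m<M. x^((m+Suc k)+m)/(fact (m+Suc k) * fact m)) = sum f W"
    unfolding W_def f_def by (subst sum.reindex) (auto simp: inj_on_def sum.cartesian_product intro!: sum.cong)
  have fin: "finite D0" "finite U" "finite W" unfolding D0_def U_def W_def by auto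
  have dis: "D0 \<inter> U = {}" "(D0 \<union> U) \<inter> W = {}" unfolding D0_def U_def W_def by auto
  have sub: "D0 \<union> U \<union> W \<subseteq> {..<?L}\<times>{..<?L}" unfolding D0_def U_def W_def by auto
  have "sum f D0 + sum f U + sum f W = sum f (D0 \<union> U \<union> W)"
    using fin dis by (simp add: sum.union_disjoint)
  also have "\<dots> \<le> sum f ({..<?L}\<times>{..<?L})"
    using sub x by (intro sum_mono2) (auto simp: f_def)
  also have "\<dots> = (\<Sum>a<?L. x^a/fact a) * (\<Sum>b<?L. x^b/fact b)"
    by (simp add: sum_product sum.cartesian_product f_def power_add)
  also have "\<dots> \<le> exp x * exp x"
    using x by (intro mult_mono exp_partial_le sum_nonneg) auto
  finally show ?thesis using d0 u w by simp
qed

lemma bessel_partial: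
  assumes k: "0 \<le> \<kappa>"
  shows "besselI 0 \<kappa> + 2 * (\<Sum>k<N. besselI (Suc k) \<kappa>) \<le> exp \<kappa>"
proof -
  define x where "x = \<kappa>/2"
  have x: "0 \<le> x" using k by (simp add: x_def)
  have e1: "(\<lambda>m. x^(2*m+0)/(fact m * fact (m+0))) = (\<lambda>m. x^(m+m)/(fact m * fact m))"
    by (simp add: mult_2)
  have e2: "(\<lambda>m. x^(2*m+Suc k)/(fact m * fact (m+Suc k))) = (\<lambda>m. x^(m+(m+Suc k))/(fact m * fact (m+Suc k)))" for k
    by (simp add: mult_2 add.assoc)
  have e3: "(\<lambda>m. x^(2*m+Suc k)/(fact m * fact (m+Suc k))) = (\<lambda>m. x^((m+Suc k)+m)/(fact (m+Suc k) * fact m))" for k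
  proof (rule ext)
    fix m
    have "2*m+Suc k = (m+Suc k)+m" by simp
    then show "x^(2*m+Suc k)/(fact m * fact (m+Suc k)) = x^((m+Suc k)+m)/(fact (m+Suc k) * fact m)"
      by (simp only: mult.commute[of "fact m"])
  qed
  have l0: "(\<lambda>M. \<Sum>m<M. x^(m+m)/(fact m * fact m)) \<longlonglongrightarrow> besselI 0 \<kappa>"
    using summable_LIMSEQ[OF bt_summable[OF x, of 0]] unfolding besselI_def x_def[symmetric] e1 .
  have l1: "(\<lambda>M. \<Sum>m<M. x^(m+(m+Suc k))/(fact m * fact (m+Suc k))) \<longlonglongrightarrow> besselI (Suc k) \<kappa>" for k
    using summable_LIMSEQ[OF bt_summable[OF x, of "Suc k"]] unfolding besselI_def x_def[symmetric] e2 .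
  have l2: "(\<lambda>M. \<Sum>m<M. x^((m+Suc k)+m)/(fact (m+Suc k) * fact m)) \<longlonglongrightarrow> besselI (Suc k) \<kappa>" for k
    using summable_LIMSEQ[OF bt_summable[OF x, of "Suc k"]] unfolding besselI_def x_def[symmetric] e3 .
  have lim: "(\<lambda>M. (\<Sum>m<M. x^(m+m)/(fact m * fact m)) + (\<Sum>k<N. \<Sum>m<M. x^(m+(m+Suc k))/(fact m * fact (m+Suc k)))
       + (\<Sum>k<N. \<Sum>m<M. x^((m+Suc k)+m)/(fact (m+Suc k) * fact m)))
     \<longlonglongrightarrow> besselI 0 \<kappa> + (\<Sum>k<N. besselI (Suc k) \<kappa>) + (\<Sum>k<N. besselI (Suc k) \<kappa>)"
    by (intro tendsto_add tendsto_sum l0 l1 l2)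
  have "besselI 0 \<kappa> + (\<Sum>k<N. besselI (Suc k) \<kappa>) + (\<Sum>k<N. besselI (Suc k) \<kappa>) \<le> exp x * exp x"
    by (rule LIMSEQ_le_const2[OF lim]) (use box[OF x] in blast)
  also have "exp x * exp x = exp \<kappa>" by (simp add: x_def exp_add[symmetric])
  finally show ?thesis by simp
qed

lemma bessel_sum:
  assumes k: "0 \<le> \<kappa>"
  shows "summable (\<lambda>k. besselI (Suc k) \<kappa>)"
    and "besselI 0 \<kappa> + 2 * (\<Sum>k. besselI (Suc k) \<kappa>) \<le> exp \<kappa>"
proof -
  have b: "(\<Sum>k<N. besselI (Suc k) \<kappa>) \<le> (exp \<kappa> - besselI 0 \<kappa>) / 2" for N
    using bessel_partial[OF k, of N] by simp
  show s: "summable (\<lambda>k. besselI (Suc k) \<kappa>)"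
    by (rule summableI_nonneg_bounded[OF besselI_nonneg[OF k] b])
  have "(\<Sum>k. besselI (Suc k) \<kappa>) \<le> (exp \<kappa> - besselI 0 \<kappa>) / 2"
    by (rule suminf_le_const[OF s b])
  thus "besselI 0 \<kappa> + 2 * (\<Sum>k. besselI (Suc k) \<kappa>) \<le> exp \<kappa>" by simp
qed



lemma Z_bounds:
  assumes k: "0 \<le> \<kappa>"
  shows "1 \<le> vm_Z l \<kappa>" "vm_Z l \<kappa> \<le> exp \<kappa> / besselI 0 \<kappa>"
proof -
  have I0: "1 \<le> besselI 0 \<kappa>" by (rule besselI0_ge1[OF k])
  have s: "summable (\<lambda>k. besselI (Suc k) \<kappa>)" by (rule bessel_sum(1)[OF k])
  have le: "besselI (Suc k) \<kappa> * \<bar>cos (real (Suc k) * arccos l)\<bar> \<le> besselI (Suc k) \<kappa>" for k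
    using besselI_nonneg[OF k, of "Suc k"] by (intro mult_left_le) auto
  have nn: "0 \<le> besselI (Suc k) \<kappa> * \<bar>cos (real (Suc k) * arccos l)\<bar>" for k
    using besselI_nonneg[OF k, of "Suc k"] by simp
  have s2: "summable (\<lambda>k. besselI (Suc k) \<kappa> * \<bar>cos (real (Suc k) * arccos l)\<bar>)"
    by (rule summable_comparison_test'[OF s]) (use le nn in simp)
  have S0: "0 \<le> (\<Sum>k. besselI (Suc k) \<kappa> * \<bar>cos (real (Suc k) * arccos l)\<bar>)"
    by (intro suminf_nonneg s2 nn)
  have S1: "(\<Sum>k. besselI (Suc k) \<kappa> * \<bar>cos (real (Suc k) * arccos l)\<bar>) \<le> (\<Sum>k. besselI (Suc k) \<kappa>)"
    by (intro suminf_le s2 s le)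
  show "1 \<le> vm_Z l \<kappa>" unfolding vm_Z_def using S0 I0 by simp
  have "vm_Z l \<kappa> \<le> 1 + 2 / besselI 0 \<kappa> * (\<Sum>k. besselI (Suc k) \<kappa>)"
    unfolding vm_Z_def using S1 I0 by (intro add_left_mono mult_left_mono) auto
  also have "\<dots> = (besselI 0 \<kappa> + 2 * (\<Sum>k. besselI (Suc k) \<kappa>)) / besselI 0 \<kappa>"
    using I0 by (simp add: field_simps)
  also have "\<dots> \<le> exp \<kappa> / besselI 0 \<kappa>"
    using I0 bessel_sum(2)[OF k] by (intro divide_right_mono) auto
  finally show "vm_Z l \<kappa> \<le> exp \<kappa> / besselI 0 \<kappa>" .
qed

lemma w0: "0 \<le> \<kappa> \<Longrightarrow> (vm_gamma l \<kappa> 0 / vm_q l \<kappa> 0)^2 * vm_q l \<kappa> 0 = vm_Z l \<kappa> / pi^2"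
  using Z_bounds(1)[of \<kappa> l] by (simp add: vm_gamma_def vm_q_def field_simps power2_eq_square)

lemma wk:
  assumes k: "0 \<le> \<kappa>" and "j \<ge> 1"
  shows "(vm_gamma l \<kappa> j / vm_q l \<kappa> j)^2 * vm_q l \<kappa> j \<le> 2 * vm_Z l \<kappa> / pi^2 * ((\<kappa>/2)^j / fact j)"
proof -
  define Z where "Z = vm_Z l \<kappa>"
  define r where "r = besselI j \<kappa> / besselI 0 \<kappa>"
  define c where "c = cos (real j * arccos l)"
  have Z: "1 \<le> Z" unfolding Z_def by (rule Z_bounds(1)[OF k])
  have I0: "1 \<le> besselI 0 \<kappa>" by (rule besselI0_ge1[OF k])
  have r0: "0 \<le> r" unfolding r_def using I0 besselI_nonneg[OF k, of j] by simp
  have r1: "r \<le> (\<kappa>/2)^j / fact j"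
    unfolding r_def using besselI_le[OF k, of j] I0 by (simp add: divide_le_eq)
  have q: "vm_q l \<kappa> j = 2 / Z * r * \<bar>c\<bar>" and g: "vm_gamma l \<kappa> j = 2 / pi * r * c"
    using \<open>j \<ge> 1\<close> by (simp_all add: vm_q_def vm_gamma_def Z_def r_def c_def)
  have rhs0: "0 \<le> 2 * Z / pi^2 * ((\<kappa>/2)^j / fact j)" using Z k by simp
  show ?thesis
  proof (cases "r * \<bar>c\<bar> = 0")
    case True
    then have "vm_q l \<kappa> j = 0" using q by simp
    then show ?thesis using rhs0 by (simp add: Z_def)
  next
    case False
    then have rc: "r \<noteq> 0" "c \<noteq> 0" by auto
    have "(vm_gamma l \<kappa> j / vm_q l \<kappa> j)^2 * vm_q l \<kappa> j = 2 * Z / pi^2 * r * \<bar>c\<bar>"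
      unfolding q g using rc Z by (simp add: field_simps power2_eq_square abs_mult_self_eq)
    also have "\<dots> \<le> 2 * Z / pi^2 * r * 1"
      using Z r0 by (intro mult_left_mono) (auto simp: abs_cos_le_one c_def)
    also have "\<dots> \<le> 2 * Z / pi^2 * ((\<kappa>/2)^j / fact j)"
      using Z r1 by (simp only: mult_1_right, intro mult_left_mono) auto
    finally show ?thesis by (simp add: Z_def)
  qed
qed

lemma final_series:
  assumes k: "0 < \<kappa>" and a: "1 \<le> \<alpha>" and D: "0 \<le> D"
  shows "(\<Sum>k. ennreal ((vm_gamma l \<kappa> k / vm_q l \<kappa> k)^2 * vm_q l \<kappa> k * (D * \<alpha>^k)))
     \<le> ennreal (D * exp \<kappa> / (pi^2 * besselI 0 \<kappa>) * (1 + 2 * exp \<kappa> / besselI 0 \<kappa> * (exp (\<alpha> * \<kappa> / 2) - 1)))"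
proof -
  define Z where "Z = vm_Z l \<kappa>"
  define C where "C = 2 * Z * D / pi^2"
  define y where "y = \<alpha> * \<kappa> / 2"
  define b where "b = (\<lambda>k. C * (y^k / fact k) + (if k = 0 then Z * D / pi^2 - C else 0))"
  have Z1: "1 \<le> Z" unfolding Z_def using Z_bounds(1) k by simp
  have y0: "0 \<le> y" unfolding y_def using k a by simp
  have C0: "0 \<le> C" unfolding C_def using Z1 D by simp
  have trm: "(vm_gamma l \<kappa> k / vm_q l \<kappa> k)^2 * vm_q l \<kappa> k * (D * \<alpha>^k) \<le> b k" for k
  proof (cases k)
    case 0 then show ?thesis using w0[of \<kappa> l] k by (simp add: b_def Z_def)
  next
    case (Suc j)
    have "(vm_gamma l \<kappa> k / vm_q l \<kappa> k)^2 * vm_q l \<kappa> k * (D * \<alpha>^k) \<le> 2 * Z / pi^2 * ((\<kappa>/2)^k / fact k) * (D * \<alpha>^k)"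
      using wk[of \<kappa> k l] k D a Suc by (intro mult_right_mono) (auto simp: Z_def)
    also have "\<dots> = C * (y^k / fact k)"
      by (simp add: C_def y_def power_mult_distrib field_simps)
    finally show ?thesis using Suc by (simp add: b_def)
  qed
  have b0: "0 \<le> b k" for k using C0 y0 Z1 D by (simp add: b_def C_def)
  have sums: "b sums (C * exp y + (Z * D / pi^2 - C))"
  proof -
    have "(\<lambda>k. C * (y^k / fact k)) sums (C * exp y)"
      using sums_mult[OF exp_converges[of y], of C] by (simp add: divide_inverse mult.commute)
    moreover have "(\<lambda>k. if k = 0 then Z * D / pi^2 - C else 0) sums (Z * D / pi^2 - C)"
      using sums_single[of 0 "\<lambda>_. Z * D / pi^2 - C"] by simp
    ultimately show ?thesis unfolding b_def by (rule sums_add)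
  qed
  have "(\<Sum>k. ennreal ((vm_gamma l \<kappa> k / vm_q l \<kappa> k)^2 * vm_q l \<kappa> k * (D * \<alpha>^k))) \<le> (\<Sum>k. ennreal (b k))"
    by (intro suminf_le ennreal_leI trm) auto
  also have "\<dots> = ennreal (C * exp y + (Z * D / pi^2 - C))"
    by (rule suminf_ennreal_eq[OF b0 sums])
  also have "\<dots> \<le> ennreal (D * exp \<kappa> / (pi^2 * besselI 0 \<kappa>) * (1 + 2 * exp \<kappa> / besselI 0 \<kappa> * (exp (\<alpha> * \<kappa> / 2) - 1)))"
  proof (rule ennreal_leI)
    define R where "R = exp \<kappa> / besselI 0 \<kappa>"
    define E where "E = exp y - 1"
    have I0: "1 \<le> besselI 0 \<kappa>" using besselI0_ge1 k by simp
    have ZR: "Z \<le> R" unfolding Z_def R_def using Z_bounds(2) k by simp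
    have R1: "1 \<le> R" using ZR Z1 by simp
    have E0: "0 \<le> E" unfolding E_def using y0 by simp
    have "C * exp y + (Z * D / pi^2 - C) = Z * D / pi^2 * (1 + 2 * E)"
      by (simp add: C_def E_def field_simps)
    also have "\<dots> \<le> R * D / pi^2 * (1 + 2 * E)"
      using ZR D E0 by (intro mult_right_mono divide_right_mono) auto
    also have "\<dots> \<le> R * D / pi^2 * (1 + 2 * R * E)"
      using R1 D E0 by (intro mult_left_mono add_left_mono) (auto simp: mult_le_cancel_left1 mult_right_mono)
    also have "\<dots> = D * exp \<kappa> / (pi^2 * besselI 0 \<kappa>) * (1 + 2 * exp \<kappa> / besselI 0 \<kappa> * (exp (\<alpha> * \<kappa> / 2) - 1))"
      by (simp add: R_def E_def y_def ac_simps)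
    finally show "C * exp y + (Z * D / pi^2 - C) \<le> D * exp \<kappa> / (pi^2 * besselI 0 \<kappa>) * (1 + 2 * exp \<kappa> / besselI 0 \<kappa> * (exp (\<alpha> * \<kappa> / 2) - 1))" .
  qed
  finally show ?thesis .
qed



lemma (in prob_space) indep_var_nn_mult:
  fixes X Y :: "'a \<Rightarrow> ennreal"
  assumes "indep_var borel X borel Y"
  shows "(\<integral>\<^sup>+\<omega>. X \<omega> * Y \<omega> \<partial>M) = (\<integral>\<^sup>+\<omega>. X \<omega> \<partial>M) * (\<integral>\<^sup>+\<omega>. Y \<omega> \<partial>M)"
proof -
  have cb: "case_bool (borel::ennreal measure) borel = (\<lambda>_. borel)"
    by (rule ext) (simp split: bool.split)
  have iv: "indep_vars (\<lambda>_. borel) (case_bool X Y) UNIV"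
    using assms unfolding indep_var_def cb .
  have "(\<integral>\<^sup>+\<omega>. (\<Prod>i\<in>UNIV. case_bool X Y i \<omega>) \<partial>M) = (\<Prod>i\<in>UNIV. \<integral>\<^sup>+\<omega>. case_bool X Y i \<omega> \<partial>M)"
    by (rule indep_vars_nn_integral[OF _ iv]) auto
  thus ?thesis by (simp add: UNIV_bool mult.commute)
qed

lemma (in prob_space) K_split:
  fixes K :: "'a \<Rightarrow> nat"
  assumes Km: "K \<in> measurable M (count_space UNIV)" and Ym: "Y \<in> measurable M P"
    and ind: "\<And>S E. E \<in> sets P \<Longrightarrow> measure M {\<omega> \<in> space M. K \<omega> \<in> S \<and> Y \<omega> \<in> E}
          = measure M {\<omega> \<in> space M. K \<omega> \<in> S} * measure M {\<omega> \<in> space M. Y \<omega> \<in> E}"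
    and Hm: "H \<in> borel_measurable P"
  shows "(\<integral>\<^sup>+\<omega>. indicator {\<omega>\<in>space M. K \<omega> = k} \<omega> * H (Y \<omega>) \<partial>M)
       = ennreal (measure M {\<omega>\<in>space M. K \<omega> = k}) * (\<integral>\<^sup>+\<omega>. H (Y \<omega>) \<partial>M)"
proof -
  define Sk where "Sk = {\<omega>\<in>space M. K \<omega> = k}"
  define p where "p = measure M Sk"
  have Sk: "Sk \<in> sets M" unfolding Sk_def using Km by measurable
  have p0: "0 \<le> p" unfolding p_def by simp
  let ?N = "density M (indicator Sk)"
  have YN: "Y \<in> measurable ?N P" using Ym by (subst measurable_cong_sets[OF sets_density refl])
  have eq: "distr ?N P Y = density (distr M P Y) (\<lambda>_. ennreal p)"
  proof (rule measure_eqI)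
    show "sets (distr ?N P Y) = sets (density (distr M P Y) (\<lambda>_. ennreal p))" by simp
    fix E assume "E \<in> sets (distr ?N P Y)"
    then have E: "E \<in> sets P" by simp
    have pre: "Y -` E \<inter> space M \<in> sets M" using Ym E by (rule measurable_sets)
    have "emeasure (distr ?N P Y) E = emeasure ?N (Y -` E \<inter> space M)"
      using YN E by (simp add: emeasure_distr)
    also have "\<dots> = (\<integral>\<^sup>+\<omega>. indicator Sk \<omega> * indicator (Y -` E \<inter> space M) \<omega> \<partial>M)"
      using Sk pre by (intro emeasure_density) auto
    also have "\<dots> = emeasure M (Sk \<inter> (Y -` E \<inter> space M))"
      using Sk pre by (simp only: indicator_inter_arith[symmetric] nn_integral_indicator sets.Int)
    also have "Sk \<inter> (Y -` E \<inter> space M) = {\<omega> \<in> space M. K \<omega> \<in> {k} \<and> Y \<omega> \<in> E}"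
      unfolding Sk_def by auto
    also have "emeasure M \<dots> = ennreal (p * measure M {\<omega> \<in> space M. Y \<omega> \<in> E})"
      using ind[OF E, of "{k}"] unfolding p_def Sk_def by (simp add: emeasure_eq_measure)
    also have "\<dots> = ennreal p * emeasure M (Y -` E \<inter> space M)"
    proof -
      have "{\<omega> \<in> space M. Y \<omega> \<in> E} = Y -` E \<inter> space M" by auto
      thus ?thesis using p0 by (simp add: emeasure_eq_measure ennreal_mult)
    qed
    also have "\<dots> = ennreal p * emeasure (distr M P Y) E"
      using Ym E by (simp add: emeasure_distr)
    also have "\<dots> = emeasure (density (distr M P Y) (\<lambda>_. ennreal p)) E"
      using E by (simp add: emeasure_density_const)
    finally show "emeasure (distr ?N P Y) E = emeasure (density (distr M P Y) (\<lambda>_. ennreal p)) E" .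
  qed
  have "(\<integral>\<^sup>+\<omega>. indicator Sk \<omega> * H (Y \<omega>) \<partial>M) = (\<integral>\<^sup>+\<omega>. H (Y \<omega>) \<partial>?N)"
    using Sk Hm Ym by (subst nn_integral_density) auto
  also have "\<dots> = (\<integral>\<^sup>+x. H x \<partial>distr ?N P Y)"
    using YN Hm by (subst nn_integral_distr) auto
  also have "\<dots> = (\<integral>\<^sup>+x. H x \<partial>density (distr M P Y) (\<lambda>_. ennreal p))" unfolding eq ..
  also have "\<dots> = (\<integral>\<^sup>+x. ennreal p * H x \<partial>distr M P Y)"
    using Hm by (subst nn_integral_density) auto
  also have "\<dots> = ennreal p * (\<integral>\<^sup>+x. H x \<partial>distr M P Y)"
    using Hm by (subst nn_integral_cmult) auto
  also have "\<dots> = ennreal p * (\<integral>\<^sup>+\<omega>. H (Y \<omega>) \<partial>M)"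
    using Ym Hm by (subst nn_integral_distr) auto
  finally show ?thesis unfolding Sk_def p_def .
qed



lemma ennreal_expand:
  "0 \<le> a \<Longrightarrow> 0 \<le> b \<Longrightarrow> 0 \<le> c \<Longrightarrow> 0 \<le> (d::real) \<Longrightarrow>
  ennreal (4*a*b + 2*c*b + 2*c*d + d) = 4 * (ennreal a * ennreal b) + 2*(ennreal c * ennreal b) + 2 * (ennreal c * ennreal d) + ennreal d"
  by (simp add: ennreal_plus ennreal_mult[symmetric] ennreal_mult'[symmetric] ennreal_numeral[symmetric] mult.assoc del: ennreal_numeral)

lemma ennreal_step:
  fixes a1 a2 c A m0 m1 :: ennreal
  assumes "m1 \<le> A * c" "m0 \<le> c" "4*a2 + 2*a1 + 1 \<le> A"
  shows "4*(a2*m1) + 2*(a1*m1) + 2*(a1*m0) + m0 \<le> A*(A*c)"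
proof -
  have "4*(a2*m1) + 2*(a1*m1) + 2*(a1*m0) + m0 \<le> 4*(a2*(A*c)) + 2*(a1*(A*c)) + 2*(a1*c) + c"
    using assms by (intro add_mono mult_left_mono) auto
  also have "\<dots> = (4*a2 + 2*a1)*(A*c) + (2*a1+1)*c" by (simp add: algebra_simps)
  also have "\<dots> \<le> (4*a2 + 2*a1)*(A*c) + A*c"
    using assms(3) by (intro add_mono mult_right_mono order_refl) (auto intro: order_trans[OF _ assms(3)] add_mono simp: add.assoc[symmetric])
  also have "\<dots> = (4*a2 + 2*a1 + 1)*(A*c)" by (simp add: algebra_simps)
  also have "\<dots> \<le> A*(A*c)" using assms(3) by (intro mult_right_mono) auto
  finally show ?thesis .
qed

lemma real_step:
  fixes sv n0 n1 n2 :: real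
  assumes "0 \<le> sv" "0 \<le> n0" "0 \<le> n1" "0 \<le> n2" "n2 \<le> 2 * sv * n1 + n0"
  shows "n2^2 \<le> 4* sv^2*n1^2 + 2* sv*n1^2 + 2* sv*n0^2 + n0^2"
proof -
  have 1: "n2^2 \<le> (2 * sv * n1 + n0)^2" using assms by (intro power_mono) auto
  have 2: "(2 * sv * n1 + n0)^2 = 4* sv^2*n1^2 + 2* sv*(2*n1*n0) + n0^2" by (simp add: power2_eq_square algebra_simps)
  have 3: "0 \<le> (n1 - n0)^2" by simp
  have 4: "(n1 - n0)^2 = n1^2 + n0^2 - 2*n1*n0" by (simp add: power2_eq_square algebra_simps)
  have 5: "2*n1*n0 \<le> n1^2 + n0^2" using 3 4 by linarith
  have 5: "2* sv*(2*n1*n0) \<le> 2* sv*(n1^2 + n0^2)" using mult_left_mono[OF 5, of "2* sv"] assms(1) by simp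
  have 6: "2* sv*(n1^2 + n0^2) = 2* sv*n1^2 + 2* sv*n0^2" by (simp add: power2_eq_square algebra_simps)
  show ?thesis using 1 2 5 6 by linarith
qed

context prob_space
begin

lemma Ahat_meas:
  assumes "indep_vars (\<lambda>_. borel) Ahat {1..}" "1 \<le> j"
  shows "Ahat j \<in> borel_measurable M"
  using assms unfolding indep_vars_def by auto

lemma chebT_M_meas:
  fixes Ahat :: "nat \<Rightarrow> 'a \<Rightarrow> real^'n^'n"
  assumes "indep_vars (\<lambda>_. borel) Ahat {1..}"
  shows "(\<lambda>\<omega>. chebT (\<lambda>j. Ahat j \<omega>) k) \<in> borel_measurable M"
  by (rule chebT_meas[where B="\<lambda>\<omega> j. Ahat j \<omega>"]) (use Ahat_meas[OF assms] in auto)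

lemma indep_step:
  fixes Ahat :: "nat \<Rightarrow> 'a \<Rightarrow> real^'n^'n" and F :: "real^'n^'n \<Rightarrow> real"
  assumes ind: "indep_vars (\<lambda>_. borel) Ahat {1..}" and j: "1 \<le> j" "i < j"
    and F: "F \<in> borel_measurable borel"
  shows "(\<integral>\<^sup>+\<omega>. ennreal (F (Ahat j \<omega>)) * ennreal ((norm (chebT (\<lambda>j. Ahat j \<omega>) i))^2) \<partial>M)
       = (\<integral>\<^sup>+\<omega>. ennreal (F (Ahat j \<omega>)) \<partial>M) * (\<integral>\<^sup>+\<omega>. ennreal ((norm (chebT (\<lambda>j. Ahat j \<omega>) i))^2) \<partial>M)"
proof -
  have iv: "indep_var (PiM {j} (\<lambda>_. borel)) (\<lambda>\<omega>. restrict (\<lambda>i. Ahat i \<omega>) {j})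
                      (PiM {1..<j} (\<lambda>_. borel)) (\<lambda>\<omega>. restrict (\<lambda>i. Ahat i \<omega>) {1..<j})"
    by (rule indep_var_restrict[OF ind]) (use j in auto)
  have pj: "(\<lambda>y. y j) \<in> measurable (PiM {j} (\<lambda>_. borel)) (borel :: (real^'n^'n) measure)"
    by (rule measurable_component_singleton) simp
  have Y1: "(\<lambda>y. ennreal (F (y j))) \<in> borel_measurable (PiM {j} (\<lambda>_. borel :: (real^'n^'n) measure))"
    using measurable_compose[OF pj F] by measurable
  have Y2c: "(\<lambda>y. chebT y i) \<in> borel_measurable (PiM {1..<j} (\<lambda>_. borel :: (real^'n^'n) measure))"
    by (rule chebT_meas[where B="\<lambda>y. y"]) (rule measurable_component_singleton, use j in auto)
  have Y2: "(\<lambda>y. ennreal ((norm (chebT y i))^2)) \<in> borel_measurable (PiM {1..<j} (\<lambda>_. borel :: (real^'n^'n) measure))"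
    using Y2c by measurable
  note iv2 = indep_var_compose[OF iv Y1 Y2]
  have e1: "(\<lambda>y. ennreal (F (y j))) \<circ> (\<lambda>\<omega>. restrict (\<lambda>i. Ahat i \<omega>) {j}) = (\<lambda>\<omega>. ennreal (F (Ahat j \<omega>)))"
    by (rule ext) simp
  have e2: "(\<lambda>y. ennreal ((norm (chebT y i))^2)) \<circ> (\<lambda>\<omega>. restrict (\<lambda>i. Ahat i \<omega>) {1..<j})
          = (\<lambda>\<omega>. ennreal ((norm (chebT (\<lambda>j. Ahat j \<omega>) i))^2))"
  proof (rule ext)
    fix \<omega>
    have "chebT (restrict (\<lambda>i. Ahat i \<omega>) {1..<j}) i = chebT (\<lambda>j. Ahat j \<omega>) i"
      by (rule chebT_cong) (use j in auto)
    thus "((\<lambda>y. ennreal ((norm (chebT y i))^2)) \<circ> (\<lambda>\<omega>. restrict (\<lambda>i. Ahat i \<omega>) {1..<j})) \<omega>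
          = ennreal ((norm (chebT (\<lambda>j. Ahat j \<omega>) i))^2)" by simp
  qed
  show ?thesis
    by (rule indep_var_nn_mult) (use iv2 in \<open>simp only: e1 e2\<close>)
qed

lemma moment_bound:
  fixes Ahat :: "nat \<Rightarrow> 'a \<Rightarrow> real^'n^'n"
  assumes ind: "indep_vars (\<lambda>_. borel) Ahat {1..}"
    and mom: "\<And>k. k \<ge> 1 \<Longrightarrow>
          4 * (\<integral>\<^sup>+ \<omega>. ennreal ((spec_norm (Ahat k \<omega>))^2) \<partial>M)
          + 2 * (\<integral>\<^sup>+ \<omega>. ennreal (spec_norm (Ahat k \<omega>)) \<partial>M) + 1 \<le> ennreal \<alpha>"
  shows "1 \<le> \<alpha>" "(\<integral>\<^sup>+\<omega>. ennreal ((norm (chebT (\<lambda>j. Ahat j \<omega>) k))^2) \<partial>M) \<le> ennreal (real CARD('n) * \<alpha>^k)"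
proof -
  define D where "D = real CARD('n)"
  define m where "m = (\<lambda>k. \<integral>\<^sup>+\<omega>. ennreal ((norm (chebT (\<lambda>j. Ahat j \<omega>) k))^2) \<partial>M)"
  define a2 where "a2 = (\<lambda>k. \<integral>\<^sup>+\<omega>. ennreal ((spec_norm (Ahat k \<omega>))^2) \<partial>M)"
  define a1 where "a1 = (\<lambda>k. \<integral>\<^sup>+\<omega>. ennreal (spec_norm (Ahat k \<omega>)) \<partial>M)"
  have momk: "4 * a2 k + 2 * a1 k + 1 \<le> ennreal \<alpha>" if "k \<ge> 1" for k
    using mom[OF that] unfolding a1_def a2_def .
  have "(1::ennreal) \<le> 4 * a2 1 + 2 * a1 1 + 1" by (simp add: add_increasing)
  also have "\<dots> \<le> ennreal \<alpha>" by (rule momk) simp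
  finally have "1 \<le> ennreal \<alpha>" .
  then show a1: "1 \<le> \<alpha>" by simp
  have D0: "0 \<le> D" by (simp add: D_def)
  have cm[measurable]: "(\<lambda>\<omega>. chebT (\<lambda>j. Ahat j \<omega>) k) \<in> borel_measurable M" for k
    by (rule chebT_M_meas[OF ind])
  have Am[measurable]: "Ahat (Suc k) \<in> borel_measurable M" for k
    by (rule Ahat_meas[OF ind]) simp
  have base0: "m 0 = ennreal D"
    by (simp add: m_def normsq_mat1 D_def emeasure_space_1)
  have a2le: "a2 k \<le> ennreal \<alpha>" if "k \<ge> 1" for k
  proof -
    have "a2 k \<le> 4 * a2 k + 2 * a1 k + 1"
    proof (rule order_trans[of _ "4 * a2 k"])
      show "a2 k \<le> 4 * a2 k" using mult_right_mono[of 1 4 "a2 k"] by simp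
    qed (auto intro: add_increasing2)
    also have "\<dots> \<le> ennreal \<alpha>" by (rule momk[OF that])
    finally show ?thesis .
  qed
  have base1: "m 1 \<le> ennreal (D * \<alpha>)"
  proof -
    have "m 1 = (\<integral>\<^sup>+\<omega>. ennreal ((norm (Ahat 1 \<omega>))^2) \<partial>M)" by (simp add: m_def)
    also have "\<dots> \<le> (\<integral>\<^sup>+\<omega>. ennreal D * ennreal ((spec_norm (Ahat 1 \<omega>))^2) \<partial>M)"
      by (intro nn_integral_mono) (simp add: ennreal_mult[symmetric] D0 ennreal_leI norm_le_spec D_def)
    also have "\<dots> = ennreal D * a2 1"
      unfolding a2_def using Am[of 0] by (subst nn_integral_cmult) auto
    also have "\<dots> \<le> ennreal D * ennreal \<alpha>" by (intro mult_left_mono a2le) auto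
    also have "\<dots> = ennreal (D * \<alpha>)" using D0 a1 by (simp add: ennreal_mult)
    finally show ?thesis .
  qed
  have step: "m (Suc (Suc k)) \<le> 4 * (a2 (k+2) * m (Suc k)) + 2 * (a1 (k+2) * m (Suc k)) + 2 * (a1 (k+2) * m k) + m k" for k
  proof -
    let ?s = "\<lambda>\<omega>. spec_norm (Ahat (k+2) \<omega>)"
    let ?n1 = "\<lambda>\<omega>. norm (chebT (\<lambda>j. Ahat j \<omega>) (Suc k))"
    let ?n0 = "\<lambda>\<omega>. norm (chebT (\<lambda>j. Ahat j \<omega>) k)"
    have Ak2[measurable]: "Ahat (k+2) \<in> borel_measurable M" using Am[of "Suc k"] by simp
    have "m (Suc (Suc k)) \<le> (\<integral>\<^sup>+\<omega>. 4 * (ennreal ((?s \<omega>)^2) * ennreal ((?n1 \<omega>)^2)) + 2 * (ennreal (?s \<omega>) * ennreal ((?n1 \<omega>)^2))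
         + 2 * (ennreal (?s \<omega>) * ennreal ((?n0 \<omega>)^2)) + ennreal ((?n0 \<omega>)^2) \<partial>M)"
      unfolding m_def
    proof (intro nn_integral_mono)
      fix \<omega>
      have "(norm (chebT (\<lambda>j. Ahat j \<omega>) (Suc (Suc k))))^2 \<le> 4 * (?s \<omega>)^2 * (?n1 \<omega>)^2 + 2 * ?s \<omega> * (?n1 \<omega>)^2 + 2 * ?s \<omega> * (?n0 \<omega>)^2 + (?n0 \<omega>)^2"
        by (rule real_step) (use chebT_rec_norm[of "\<lambda>j. Ahat j \<omega>" k] in \<open>auto simp: spec_nonneg simp del: chebT.simps\<close>)
      then have "ennreal ((norm (chebT (\<lambda>j. Ahat j \<omega>) (Suc (Suc k))))^2) \<le> ennreal (4 * (?s \<omega>)^2 * (?n1 \<omega>)^2 + 2 * ?s \<omega> * (?n1 \<omega>)^2 + 2 * ?s \<omega> * (?n0 \<omega>)^2 + (?n0 \<omega>)^2)"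
        by (rule ennreal_leI)
      also have "\<dots> = 4 * (ennreal ((?s \<omega>)^2) * ennreal ((?n1 \<omega>)^2)) + 2 * (ennreal (?s \<omega>) * ennreal ((?n1 \<omega>)^2))
         + 2 * (ennreal (?s \<omega>) * ennreal ((?n0 \<omega>)^2)) + ennreal ((?n0 \<omega>)^2)"
        by (rule ennreal_expand) (auto simp: spec_nonneg)
      finally show "ennreal ((norm (chebT (\<lambda>j. Ahat j \<omega>) (Suc (Suc k))))^2) \<le> \<dots>" .
    qed
    also have "\<dots> = 4 * (\<integral>\<^sup>+\<omega>. ennreal ((?s \<omega>)^2) * ennreal ((?n1 \<omega>)^2) \<partial>M) + 2 * (\<integral>\<^sup>+\<omega>. ennreal (?s \<omega>) * ennreal ((?n1 \<omega>)^2) \<partial>M)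
         + 2 * (\<integral>\<^sup>+\<omega>. ennreal (?s \<omega>) * ennreal ((?n0 \<omega>)^2) \<partial>M) + (\<integral>\<^sup>+\<omega>. ennreal ((?n0 \<omega>)^2) \<partial>M)"
      by (simp add: nn_integral_add nn_integral_cmult)
    also have "\<dots> = 4 * (a2 (k+2) * m (Suc k)) + 2 * (a1 (k+2) * m (Suc k)) + 2 * (a1 (k+2) * m k) + m k"
      unfolding a1_def a2_def m_def
      using indep_step[OF ind, of "k+2" "Suc k" "\<lambda>B. (spec_norm B)^2"]
            indep_step[OF ind, of "k+2" "Suc k" spec_norm]
            indep_step[OF ind, of "k+2" k spec_norm]
      by (simp add: spec_meas_borel)
    finally show ?thesis .
  qed
  have "m k \<le> ennreal (D * \<alpha>^k) \<and> m (Suc k) \<le> ennreal (D * \<alpha>^(Suc k))" for k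
  proof (induction k)
    case 0 then show ?case using base0 base1 by simp
  next
    case (Suc k)
    have c: "ennreal (D * \<alpha>^(Suc k)) = ennreal \<alpha> * ennreal (D * \<alpha>^k)"
      "ennreal (D * \<alpha>^(Suc (Suc k))) = ennreal \<alpha> * (ennreal \<alpha> * ennreal (D * \<alpha>^k))"
      using a1 D0 by (simp_all add: ennreal_mult[symmetric] algebra_simps)
    have "m (Suc (Suc k)) \<le> ennreal \<alpha> * (ennreal \<alpha> * ennreal (D * \<alpha>^k))"
      by (rule order_trans[OF step ennreal_step]) (use Suc c momk[of "k+2"] in auto)
    then show ?case using Suc c by simp
  qed
  then show "(\<integral>\<^sup>+\<omega>. ennreal ((norm (chebT (\<lambda>j. Ahat j \<omega>) k))^2) \<partial>M) \<le> ennreal (real CARD('n) * \<alpha>^k)"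
    unfolding m_def D_def by blast
qed

end



theorem mainTheorem7:
  fixes M :: "'a measure"
    and A :: "real^'n^'n"
    and Ahat :: "nat \<Rightarrow> 'a \<Rightarrow> real^'n^'n"
    and K :: "'a \<Rightarrow> nat"
    and \<alpha> l \<kappa> :: real
  assumes "prob_space M"
    and "transpose A = A"
    and "prob_space.indep_vars M (\<lambda>_. borel) Ahat {1..}"
    and "\<And>j r c. j \<ge> 1 \<Longrightarrow> integrable M (\<lambda>\<omega>. Ahat j \<omega> $ r $ c)"
    and "\<And>j r c. j \<ge> 1 \<Longrightarrow> prob_space.expectation M (\<lambda>\<omega>. Ahat j \<omega> $ r $ c) = A $ r $ c"
    and "\<And>k. k \<ge> 1 \<Longrightarrow>
          4 * (\<integral>\<^sup>+ \<omega>. ennreal ((spec_norm (Ahat k \<omega>))^2) \<partial>M)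
          + 2 * (\<integral>\<^sup>+ \<omega>. ennreal (spec_norm (Ahat k \<omega>)) \<partial>M) + 1 \<le> ennreal \<alpha>"
    and "-1 < l" and "l < 1" and "\<kappa> > 0"
    and "K \<in> measurable M (count_space UNIV)"
    and "\<And>S E. E \<in> sets (PiM {1..} (\<lambda>_. borel)) \<Longrightarrow>
          measure M {\<omega> \<in> space M. K \<omega> \<in> S \<and> restrict (\<lambda>j. Ahat j \<omega>) {1..} \<in> E}
          = measure M {\<omega> \<in> space M. K \<omega> \<in> S}
            * measure M {\<omega> \<in> space M. restrict (\<lambda>j. Ahat j \<omega>) {1..} \<in> E}"
    and "\<And>k. measure M {\<omega> \<in> space M. K \<omega> = k} = vm_q l \<kappa> k"
  shows "(\<integral>\<^sup>+ \<omega>. ennreal ((frob_norm ((vm_gamma l \<kappa> (K \<omega>) / vm_q l \<kappa> (K \<omega>))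
             *\<^sub>R chebT (\<lambda>j. Ahat j \<omega>) (K \<omega>)))^2) \<partial>M)
         \<le> ennreal (real CARD('n) * exp \<kappa> / (pi^2 * besselI 0 \<kappa>)
             * (1 + 2 * exp \<kappa> / besselI 0 \<kappa> * (exp (\<alpha> * \<kappa> / 2) - 1)))"
proof -
  interpret prob_space M by fact
  note ind = assms(3)
  have mom: "\<And>k. k \<ge> 1 \<Longrightarrow>
          4 * (\<integral>\<^sup>+ \<omega>. ennreal ((spec_norm (Ahat k \<omega>))^2) \<partial>M)
          + 2 * (\<integral>\<^sup>+ \<omega>. ennreal (spec_norm (Ahat k \<omega>)) \<partial>M) + 1 \<le> ennreal \<alpha>" by fact
  note mb = moment_bound[OF ind mom]
  have a1: "1 \<le> \<alpha>" by (rule mb(1))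
  define D where "D = real CARD('n)"
  define c where "c = (\<lambda>k. vm_gamma l \<kappa> k / vm_q l \<kappa> k)"
  define G where "G = (\<lambda>k \<omega>. ennreal ((frob_norm (c k *\<^sub>R chebT (\<lambda>j. Ahat j \<omega>) k))^2))"
  define H where "H = (\<lambda>k (y::nat \<Rightarrow> real^'n^'n). ennreal ((frob_norm (c k *\<^sub>R chebT y k))^2))"
  define Y where "Y = (\<lambda>\<omega>. restrict (\<lambda>j. Ahat j \<omega>) {1..})"
  define P where "P = PiM {1..} (\<lambda>_::nat. borel :: (real^'n^'n) measure)"
  define Sk where "Sk = (\<lambda>k. {\<omega>\<in>space M. K \<omega> = k})"
  have Km: "K \<in> measurable M (count_space UNIV)" by fact
  have Am: "Ahat j \<in> borel_measurable M" if "1 \<le> j" for j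
    by (rule Ahat_meas[OF ind that])
  have Ym: "Y \<in> measurable M P"
    unfolding Y_def P_def by (rule measurable_restrict) (use Am in auto)
  have Hm: "H k \<in> borel_measurable P" for k
  proof -
    have "(\<lambda>y. chebT y k) \<in> borel_measurable P"
      unfolding P_def by (rule chebT_meas[where B="\<lambda>y. y"]) (rule measurable_component_singleton, auto)
    then show ?thesis unfolding H_def frob_eq_norm by measurable
  qed
  have GH: "G k \<omega> = H k (Y \<omega>)" for k \<omega>
  proof -
    have "chebT (Y \<omega>) k = chebT (\<lambda>j. Ahat j \<omega>) k"
      unfolding Y_def by (rule chebT_cong) auto
    thus ?thesis unfolding G_def H_def by simp
  qed
  have Gm: "G k \<in> borel_measurable M" for k
  proof -
    have "(\<lambda>\<omega>. H k (Y \<omega>)) \<in> borel_measurable M" using measurable_compose[OF Ym Hm] .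
    moreover have "G k = (\<lambda>\<omega>. H k (Y \<omega>))" by (rule ext) (rule GH)
    ultimately show ?thesis by simp
  qed
  have Skm: "Sk k \<in> sets M" for k unfolding Sk_def using Km by measurable
  have qk: "measure M (Sk k) = vm_q l \<kappa> k" for k unfolding Sk_def by (rule assms(12))
  have q0: "0 \<le> vm_q l \<kappa> k" for k using qk[of k] by (metis measure_nonneg)
  have ind2: "\<And>S E. E \<in> sets P \<Longrightarrow> measure M {\<omega> \<in> space M. K \<omega> \<in> S \<and> Y \<omega> \<in> E}
          = measure M {\<omega> \<in> space M. K \<omega> \<in> S} * measure M {\<omega> \<in> space M. Y \<omega> \<in> E}"
    unfolding Y_def P_def by (rule assms(11))
  have "(\<integral>\<^sup>+ \<omega>. G (K \<omega>) \<omega> \<partial>M) = (\<integral>\<^sup>+ \<omega>. (\<Sum>k. indicator (Sk k) \<omega> * G k \<omega>) \<partial>M)"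
  proof (rule nn_integral_cong)
    fix \<omega> assume "\<omega> \<in> space M"
    then have "(\<lambda>k. indicator (Sk k) \<omega> * G k \<omega>) = (\<lambda>k. if k = K \<omega> then G k \<omega> else 0)"
      by (auto simp: Sk_def indicator_def fun_eq_iff)
    then show "G (K \<omega>) \<omega> = (\<Sum>k. indicator (Sk k) \<omega> * G k \<omega>)"
      using sums_unique[OF sums_single[of "K \<omega>" "\<lambda>k. G k \<omega>"]] by simp
  qed
  also have "\<dots> = (\<Sum>k. \<integral>\<^sup>+ \<omega>. indicator (Sk k) \<omega> * G k \<omega> \<partial>M)"
    by (rule nn_integral_suminf) (use Skm Gm in measurable)
  also have "\<dots> = (\<Sum>k. ennreal (vm_q l \<kappa> k) * (\<integral>\<^sup>+ \<omega>. G k \<omega> \<partial>M))"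
  proof (rule suminf_cong)
    fix k
    have "(\<integral>\<^sup>+ \<omega>. indicator (Sk k) \<omega> * G k \<omega> \<partial>M) = (\<integral>\<^sup>+ \<omega>. indicator {\<omega>\<in>space M. K \<omega> = k} \<omega> * H k (Y \<omega>) \<partial>M)"
      unfolding GH Sk_def ..
    also have "\<dots> = ennreal (measure M {\<omega>\<in>space M. K \<omega> = k}) * (\<integral>\<^sup>+ \<omega>. H k (Y \<omega>) \<partial>M)"
      by (rule K_split[OF Km Ym ind2 Hm])
    also have "\<dots> = ennreal (vm_q l \<kappa> k) * (\<integral>\<^sup>+ \<omega>. G k \<omega> \<partial>M)"
      using qk[of k] unfolding Sk_def GH by simp
    finally show "(\<integral>\<^sup>+ \<omega>. indicator (Sk k) \<omega> * G k \<omega> \<partial>M) = ennreal (vm_q l \<kappa> k) * (\<integral>\<^sup>+ \<omega>. G k \<omega> \<partial>M)" .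
  qed
  also have "\<dots> \<le> (\<Sum>k. ennreal ((vm_gamma l \<kappa> k / vm_q l \<kappa> k)^2 * vm_q l \<kappa> k * (D * \<alpha>^k)))"
  proof (intro suminf_le summableI)
    fix k
    have "(\<integral>\<^sup>+ \<omega>. G k \<omega> \<partial>M) = (\<integral>\<^sup>+ \<omega>. ennreal ((c k)^2) * ennreal ((norm (chebT (\<lambda>j. Ahat j \<omega>) k))^2) \<partial>M)"
      unfolding G_def frob_eq_norm
      by (intro nn_integral_cong) (simp add: ennreal_mult[symmetric] power_mult_distrib)
    also have "\<dots> = ennreal ((c k)^2) * (\<integral>\<^sup>+ \<omega>. ennreal ((norm (chebT (\<lambda>j. Ahat j \<omega>) k))^2) \<partial>M)"
      using chebT_M_meas[OF ind, of k] by (subst nn_integral_cmult) auto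
    also have "\<dots> \<le> ennreal ((c k)^2) * ennreal (D * \<alpha>^k)"
      using mb(2)[of k] unfolding D_def by (intro mult_left_mono) auto
    finally have "ennreal (vm_q l \<kappa> k) * (\<integral>\<^sup>+ \<omega>. G k \<omega> \<partial>M) \<le> ennreal (vm_q l \<kappa> k) * (ennreal ((c k)^2) * ennreal (D * \<alpha>^k))"
      by (intro mult_left_mono) auto
    also have "\<dots> = ennreal ((vm_gamma l \<kappa> k / vm_q l \<kappa> k)^2 * vm_q l \<kappa> k * (D * \<alpha>^k))"
      using q0[of k] a1 by (simp add: c_def D_def ennreal_mult[symmetric] mult_ac)
    finally show "ennreal (vm_q l \<kappa> k) * (\<integral>\<^sup>+ \<omega>. G k \<omega> \<partial>M) \<le> \<dots>" .
  qed
  also have "\<dots> \<le> ennreal (D * exp \<kappa> / (pi^2 * besselI 0 \<kappa>) * (1 + 2 * exp \<kappa> / besselI 0 \<kappa> * (exp (\<alpha> * \<kappa> / 2) - 1)))"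
    by (rule final_series) (use assms(9) a1 in \<open>auto simp: D_def\<close>)
  finally show ?thesis unfolding G_def c_def D_def .
qed


end
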